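(* Let $n\ge 1$ and let $K=(\beta(\mathbb{Z}^n)\times \mathbb{I}^n)/h$, with $\mathbb{I}=[0,1]$ and $h$ the equivalence relation described in the context. Define $\sigma:\mathbb{R}^n\times K\to K$ by $$\sigma\big(\vec{x},[(p,\vec{i})]_h\big)=\big[\big(h_{[\vec{x}]+N}(p),\ \vec{i}+\{\vec{x}\}-N\big)\big]_h,$$ where $[\vec{x}]\in\mathbb{Z}^n$ is the coordinatewise integer part of $\vec{x}$, $\{\vec{x}\}=\vec{x}-[\vec{x}]\in[0,1)^n$, and $N\in\{0,1\}^n$ has $N_k=1$ if $i_k+\{\vec{x}\}_k\ge 1$ and $N_k=0$ otherwise. Then $\big(\mathbb{R}^n, K, \sigma; [(0,\mathbf{0})]_h\big)$ is an ambit, i.e. $\sigma$ is a well-defined continuous action of the additive group $\mathbb{R}^n$ (Euclidean topology) on the compact Hausdorff space $K$, and the orbit of $[(0,\mathbf{0})]_h$ (with $0\in\mathbb{Z}^n\subseteq\beta(\mathbb{Z}^n)$ and $\mathbf{0}$ the zero vector of $\mathbb{I}^n$) is dense in $K$.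
   Context: $\beta(\mathbb{Z}^n)$ is the Čech–Stone compactification of the discrete group $\mathbb{Z}^n$. For $N\in\mathbb{Z}^n$, $h_N:\beta(\mathbb{Z}^n)\to\beta(\mathbb{Z}^n)$ denotes the continuous extension of the translation $\vec{z}\mapsto\vec{z}+N$ of $\mathbb{Z}^n$; write $h_1,\dots,h_n$ for $h_{e_1},\dots,h_{e_n}$. For $A\subseteq\{1,\dots,n\}$ let $\mathbf{1}_A\in\{0,1\}^n$ be its indicator vector, and for $\vec{i}\in\mathbb{I}^n$ let $\psi_A(\vec{i})$ be obtained from $\vec{i}$ by changing, for each $a\in A$, the coordinate $i_a$ to $0$ if $i_a=1$ and to $1$ if $i_a=0$. The equivalence relation $h$ on $\beta(\mathbb{Z}^n)\times\mathbb{I}^n$ identifies $(p,\vec{i})$ with $(h_{\mathbf{1}_A}(p),\psi_A(\vec{i}))$ whenever $A\subseteq\{j: i_j=1\}$ (and hence, symmetrically, identifies $(p,\vec i)$ with $(h_{-\mathbf{1}_B}(p),\psi_B(\vec i))$ for $B\subseteq\{j:i_j=0\}$); $[\cdot]_h$ denotes equivalence classes. Restricted to $\mathbb{Z}^n\times\mathbb{I}^n$ the quotient is homeomorphic to $\mathbb{R}^n$ via $[(\vec z,\vec i)]_h\mapsto \vec z+\vec i$. A dynamical system $(G,X,\pi)$ is a topological group $G$ acting continuously on a compact Hausdorff space $X$; an ambit $(G,X,\pi;x)$ is a dynamical system together with a point $x$ whose orbit $\{\pi(g,x):g\in G\}$ is dense in $X$. *)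

theory Defs
  imports "HOL-Analysis.Analysis"
begin

definition dyn_system :: "'a topology \<Rightarrow> ('g::{topological_space,group_add} \<Rightarrow> 'a \<Rightarrow> 'a) \<Rightarrow> bool" where
  "dyn_system X \<pi> \<longleftrightarrow>
     compact_space X \<and> Hausdorff_space X \<and>
     (\<forall>g. \<forall>x\<in>topspace X. \<pi> g x \<in> topspace X) \<and>
     (\<forall>x\<in>topspace X. \<pi> 0 x = x) \<and>
     (\<forall>g h. \<forall>x\<in>topspace X. \<pi> (g + h) x = \<pi> g (\<pi> h x)) \<and>
     continuous_map (prod_topology euclidean X) X (\<lambda>(g, x). \<pi> g x)"

definition ambit :: "'a topology \<Rightarrow> ('g::{topological_space,group_add} \<Rightarrow> 'a \<Rightarrow> 'a) \<Rightarrow> 'a \<Rightarrow> bool" where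
  "ambit X \<pi> x \<longleftrightarrow> dyn_system X \<pi> \<and> x \<in> topspace X \<and>
     X closure_of (range (\<lambda>g. \<pi> g x)) = topspace X"

section \<open>Cech-Stone compactification of a discrete space, as ultrafilters\<close>

definition ultrafilter_on :: "'a set set \<Rightarrow> bool" where
  "ultrafilter_on U \<longleftrightarrow> UNIV \<in> U \<and> {} \<notin> U \<and>
     (\<forall>A B. A \<in> U \<longrightarrow> A \<subseteq> B \<longrightarrow> B \<in> U) \<and>
     (\<forall>A B. A \<in> U \<longrightarrow> B \<in> U \<longrightarrow> A \<inter> B \<in> U) \<and>
     (\<forall>A. A \<in> U \<or> - A \<in> U)"

definition beta_top :: "'a set set topology" where
  "beta_top = topology (\<lambda>S. S \<subseteq> {U. ultrafilter_on U} \<and>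
      (\<forall>U\<in>S. \<exists>A\<in>U. {V. ultrafilter_on V \<and> A \<in> V} \<subseteq> S))"

definition pt :: "'a \<Rightarrow> 'a set set" where
  "pt z = {A. z \<in> A}"

text \<open>h_N: continuous extension of translation by N to ultrafilters.\<close>
definition shift :: "int^'n \<Rightarrow> (int^'n) set set \<Rightarrow> (int^'n) set set" where
  "shift N p = {A. {z. z + N \<in> A} \<in> p}"

definition Icube :: "(real^'n) set" where
  "Icube = {i. \<forall>j. 0 \<le> i$j \<and> i$j \<le> 1}"

definition ind :: "'n set \<Rightarrow> int^'n" where
  "ind A = (\<chi> j. if j \<in> A then 1 else 0)"

definition psi :: "'n set \<Rightarrow> (real^'n) \<Rightarrow> (real^'n)" where
  "psi A i = (\<chi> j. if j \<in> A then (if i$j = 1 then 0 else if i$j = 0 then 1 else i$j) else i$j)"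

definition carrierBI :: "((int^'n) set set \<times> (real^'n)) set" where
  "carrierBI = {U. ultrafilter_on U} \<times> Icube"

definition hstep :: "(((int^'n) set set \<times> (real^'n)) \<times> ((int^'n) set set \<times> (real^'n))) set" where
  "hstep = {((p, i), (shift (ind A) p, psi A i)) | p i A.
              (p, i) \<in> carrierBI \<and> A \<subseteq> {j. i$j = 1}}"

definition h_rel :: "(((int^'n) set set \<times> (real^'n)) \<times> ((int^'n) set set \<times> (real^'n))) set" where
  "h_rel = (hstep \<union> hstep\<inverse>)\<^sup>* \<inter> (carrierBI \<times> carrierBI)"

definition hclass :: "(int^'n) set set \<times> (real^'n) \<Rightarrow> ((int^'n) set set \<times> (real^'n)) set" where
  "hclass r = h_rel `` {r}"

definition Kset :: "((int^'n) set set \<times> (real^'n)) set set" where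
  "Kset = carrierBI // h_rel"

definition K_top :: "((int^'n) set set \<times> (real^'n)) set topology" where
  "K_top = topology (\<lambda>S. S \<subseteq> Kset \<and>
      openin (prod_topology beta_top (top_of_set Icube)) (\<Union>S))"

definition sigma_rep :: "real^'n \<Rightarrow> (int^'n) set set \<times> (real^'n) \<Rightarrow> (int^'n) set set \<times> (real^'n)" where
  "sigma_rep x r = (case r of (p, i) \<Rightarrow>
     let fl = (\<chi> k. \<lfloor>x$k\<rfloor>) :: int^'n;
         fr = x - (\<chi> k. of_int \<lfloor>x$k\<rfloor>);
         N = (\<chi> k. if i$k + fr$k \<ge> 1 then 1 else 0) :: int^'n
     in (shift (fl + N) p, i + fr - (\<chi> k. of_int (N$k))))"

definition sigma :: "real^'n \<Rightarrow> ((int^'n) set set \<times> (real^'n)) set \<Rightarrow> ((int^'n) set set \<times> (real^'n)) set" where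
  "sigma x c = hclass (sigma_rep x (SOME r. r \<in> c))"

end

theory Submission
  imports Defs
begin


definition cv :: "int^'n \<Rightarrow> real^'n" where "cv d = (\<chi> k. of_int (d$k))"
definition flv :: "real^'n \<Rightarrow> int^'n" where "flv y = (\<chi> k. \<lfloor>y$k\<rfloor>)"

lemma cv_add: "cv (a + b) = cv a + cv b" by (simp add: cv_def vec_eq_iff)
lemma cv_diff: "cv (a - b) = cv a - cv b" by (simp add: cv_def vec_eq_iff)
lemma cv_0[simp]: "cv 0 = 0" by (simp add: cv_def vec_eq_iff)

lemma shift_shift: "shift a (shift b p) = shift (a + b) p"
  unfolding shift_def by (simp add: ac_simps)
lemma shift_0[simp]: "shift 0 p = p" unfolding shift_def by simp

lemma ultra_shift: assumes "ultrafilter_on p" shows "ultrafilter_on (shift d p)"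
proof -
  let ?f = "\<lambda>A. {z. z + d \<in> A}"
  have m: "shift d p = {A. ?f A \<in> p}" by (simp add: shift_def)
  have f: "?f UNIV = UNIV" "?f {} = {}" "\<And>A B. ?f (A \<inter> B) = ?f A \<inter> ?f B" "\<And>A. ?f (-A) = - ?f A"
     "\<And>A B. A \<subseteq> B \<Longrightarrow> ?f A \<subseteq> ?f B" by auto
  show ?thesis using assms unfolding ultrafilter_on_def m mem_Collect_eq
  proof (intro conjI allI impI)
    assume u: "UNIV \<in> p \<and> {} \<notin> p \<and> (\<forall>A B. A \<in> p \<longrightarrow> A \<subseteq> B \<longrightarrow> B \<in> p) \<and>
    (\<forall>A B. A \<in> p \<longrightarrow> B \<in> p \<longrightarrow> A \<inter> B \<in> p) \<and> (\<forall>A. A \<in> p \<or> - A \<in> p)"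
    show "?f UNIV \<in> p" "?f {} \<notin> p" using u f by simp_all
    fix A B
    show "?f A \<in> p \<Longrightarrow> A \<subseteq> B \<Longrightarrow> ?f B \<in> p" using u f(5)[of A B] by blast
    show "?f A \<in> p \<Longrightarrow> ?f B \<in> p \<Longrightarrow> ?f (A \<inter> B) \<in> p" using u f(3)[of A B] by simp
    show "?f A \<in> p \<or> ?f (-A) \<in> p" using u f(4)[of A] by simp
  qed
qed

lemma floor_lemma:
  fixes i x :: real assumes "0 \<le> i" "i \<le> 1"
  shows "\<lfloor>x\<rfloor> + (if 1 \<le> i + (x - of_int \<lfloor>x\<rfloor>) then 1 else 0) = \<lfloor>i + x\<rfloor>"
proof -
  have a: "of_int \<lfloor>x\<rfloor> \<le> x" "x < of_int \<lfloor>x\<rfloor> + 1" by linarith+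
  show ?thesis
  proof (cases "1 \<le> i + (x - of_int \<lfloor>x\<rfloor>)")
    case True
    then have "\<lfloor>i + x\<rfloor> = \<lfloor>x\<rfloor> + 1" using a assms by (intro floor_unique; insert a assms; simp only: of_int_add of_int_1; linarith)
    then show ?thesis using True by simp
  next
    case False
    then have "\<lfloor>i + x\<rfloor> = \<lfloor>x\<rfloor>" using a assms by (intro floor_unique; insert a assms; simp only: of_int_add of_int_1; linarith)
    then show ?thesis using False by simp
  qed
qed

lemma sigma_rep_eq:
  assumes "i \<in> Icube"
  shows "sigma_rep x (p, i) = (shift (flv (i + x)) p, (i + x) - cv (flv (i + x)))"
proof -
  have e: "(\<chi> k. \<lfloor>x$k\<rfloor>) + (\<chi> k. if 1 \<le> i$k + (x - (\<chi> k. of_int \<lfloor>x$k\<rfloor>))$k then 1 else 0) = flv (i + x)"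
    using assms floor_lemma[of "i$k" "x$k" for k]
    by (simp add: vec_eq_iff flv_def Icube_def)
  have e2: "\<And>k. \<lfloor>x$k\<rfloor> + (if 1 \<le> i$k + (x - (\<chi> k. of_int \<lfloor>x$k\<rfloor>))$k then 1 else 0) = flv (i + x) $ k"
    using e[unfolded vec_eq_iff] by simp
  have e3: "i + (x - (\<chi> k. of_int \<lfloor>x$k\<rfloor>)) - (\<chi> k. of_int ((\<chi> k. if 1 \<le> i$k + (x - (\<chi> k. of_int \<lfloor>x$k\<rfloor>))$k then 1 else 0)$k))
     = (i + x) - cv (flv (i + x))"
  proof -
    { fix k
      have "of_int (flv (i + x) $ k) = real_of_int \<lfloor>x$k\<rfloor> + (if 1 \<le> i$k + (x - (\<chi> k. of_int \<lfloor>x$k\<rfloor>))$k then 1 else 0)"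
        using e2[of k, symmetric] by simp
      then have "(i + (x - (\<chi> k. of_int \<lfloor>x$k\<rfloor>)) - (\<chi> k. of_int ((\<chi> k. if 1 \<le> i$k + (x - (\<chi> k. of_int \<lfloor>x$k\<rfloor>))$k then 1 else 0)$k)))$k
     = ((i + x) - cv (flv (i + x)))$k" by (simp add: cv_def) }
    then show ?thesis by (simp add: vec_eq_iff)
  qed
  show ?thesis unfolding sigma_rep_def Let_def prod.case e e3 by simp
qed



definition rel2 :: "(((int^'n) set set \<times> (real^'n)) \<times> ((int^'n) set set \<times> (real^'n))) set" where
  "rel2 = {((p,i),(q,j)). (p,i) \<in> carrierBI \<and> (q,j) \<in> carrierBI \<and> (\<exists>d. q = shift d p \<and> j = i - cv d)}"

lemma psi_Icube: "i \<in> Icube \<Longrightarrow> psi A i \<in> Icube"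
  by (auto simp: Icube_def psi_def)

lemma hstep_rel2: "hstep \<subseteq> rel2"
proof
  fix x assume "x \<in> hstep"
  then obtain p i A where x: "x = ((p, i), (shift (ind A) p, psi A i))" and c: "(p, i) \<in> carrierBI"
    and A: "A \<subseteq> {j. i$j = 1}" unfolding hstep_def by blast
  have "psi A i = i - cv (ind A)" using A by (auto simp: psi_def cv_def ind_def vec_eq_iff)
  moreover have "(shift (ind A) p, psi A i) \<in> carrierBI" using c
    by (auto simp: carrierBI_def ultra_shift psi_Icube)
  ultimately show "x \<in> rel2" using c x unfolding rel2_def by auto
qed

lemma rel2_sym: "(a, b) \<in> rel2 \<Longrightarrow> (b, a) \<in> rel2"
  unfolding rel2_def
  apply (clarsimp)
  subgoal for p i d by (rule exI[of _ "-d"]) (simp add: shift_shift cv_diff[of 0 d, simplified])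
  done

lemma rel2_trans: "(a, b) \<in> rel2 \<Longrightarrow> (b, c) \<in> rel2 \<Longrightarrow> (a, c) \<in> rel2"
  unfolding rel2_def
  apply (clarsimp)
  subgoal for p i d d' by (rule exI[of _ "d' + d"]) (simp add: shift_shift cv_add)
  done

lemma h_rel_sub: "h_rel \<subseteq> rel2"
proof
  fix x assume "x \<in> h_rel"
  then obtain a b where x: "x = (a, b)" and r: "(a, b) \<in> (hstep \<union> hstep\<inverse>)\<^sup>*" and a: "a \<in> carrierBI"
    and b: "b \<in> carrierBI"
    unfolding h_rel_def by auto
  from r b have "(a, b) \<in> rel2"
  proof (induction rule: rtrancl_induct)
    case base
    then show ?case using a unfolding rel2_def by (cases a) (auto intro!: exI[of _ 0])
  next
    case (step y z)
    have "(y, z) \<in> rel2" using step(2) hstep_rel2 rel2_sym by blast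
    moreover then have "y \<in> carrierBI" unfolding rel2_def by auto
    ultimately show ?case using step rel2_trans by blast
  qed
  then show "x \<in> rel2" using x by simp
qed

lemma rel2_sub: "rel2 \<subseteq> h_rel"
proof
  fix x assume "x \<in> rel2"
  then obtain p i d where x: "x = ((p, i), (shift d p, i - cv d))" and c1: "(p, i) \<in> carrierBI"
    and c2: "(shift d p, i - cv d) \<in> carrierBI" unfolding rel2_def by auto
  define S where "S = {k. d$k = 1}"
  define T where "T = {k. d$k = -1}"
  have ii: "0 \<le> i$k" "i$k \<le> 1" "0 \<le> i$k - of_int (d$k)" "i$k - of_int (d$k) \<le> 1" for k
    using c1 c2 by (auto simp: carrierBI_def Icube_def cv_def)
  have dk: "d$k = 0 \<or> d$k = 1 \<or> d$k = -1" for k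
  proof -
    have "of_int (d$k) \<le> (1::real)" "-1 \<le> (of_int (d$k)::real)" using ii[of k] by linarith+
    then have "d$k \<le> 1" "-1 \<le> d$k" by linarith+
    then show ?thesis by linarith
  qed
  have S1: "i$k = 1" if "k \<in> S" for k using that ii[of k] by (simp add: S_def)
  have T0: "i$k = 0" if "k \<in> T" for k using that ii[of k] by (simp add: T_def)
  let ?m = "(shift (ind S) p, psi S i)"
  have h1: "((p, i), ?m) \<in> hstep" unfolding hstep_def using c1 S1 by blast
  have T1: "T \<subseteq> {k. (i - cv d)$k = 1}" using T0 by (auto simp: T_def cv_def)
  have h2': "((shift d p, i - cv d), (shift (ind T) (shift d p), psi T (i - cv d))) \<in> hstep"
    unfolding hstep_def using c2 T1 by blast
  have e1: "ind T + d = ind S"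
    using dk by (auto simp: vec_eq_iff ind_def S_def T_def)
  have e2: "psi T (i - cv d) = psi S i"
  proof -
    { fix k
      have "(psi T (i - cv d))$k = (psi S i)$k"
        using dk[of k] S1[of k] T0[of k] by (auto simp: psi_def cv_def S_def T_def) }
    then show ?thesis by (simp add: vec_eq_iff)
  qed
  have h2: "((shift d p, i - cv d), ?m) \<in> hstep" using h2' e1 e2 by (simp add: shift_shift)
  have "((p, i), (shift d p, i - cv d)) \<in> (hstep \<union> hstep\<inverse>)\<^sup>*"
    using h1 h2 by (meson UnI1 UnI2 converseI r_into_rtrancl rtrancl_trans)
  then show "x \<in> h_rel" using x c1 c2 unfolding h_rel_def by auto
qed

lemma h_rel_eq: "h_rel = rel2" using h_rel_sub rel2_sub by blast

lemma h_rel_iff: "((p, i), (q, j)) \<in> h_rel \<longleftrightarrow> (p, i) \<in> carrierBI \<and> (q, j) \<in> carrierBI \<and> (\<exists>d. q = shift d p \<and> j = i - cv d)"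
  unfolding h_rel_eq rel2_def by simp

lemma h_rel_refl: "r \<in> carrierBI \<Longrightarrow> (r, r) \<in> h_rel"
  by (cases r) (auto simp: h_rel_iff intro!: exI[of _ 0])

lemma h_rel_carrier: "(a, b) \<in> h_rel \<Longrightarrow> a \<in> carrierBI \<and> b \<in> carrierBI"
  unfolding h_rel_def by auto

lemma equiv_h: "equiv carrierBI h_rel"
proof (rule equivI)
  show "refl_on carrierBI h_rel" unfolding refl_on_def using h_rel_refl h_rel_carrier by auto
  show "h_rel \<subseteq> carrierBI \<times> carrierBI" unfolding h_rel_def by auto
  show "sym h_rel" unfolding sym_def h_rel_eq using rel2_sym by blast
  show "trans h_rel" unfolding trans_def h_rel_eq using rel2_trans by blast
qed



lemma flv_diff: "flv (y - cv m) = flv y - m"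
  by (simp add: flv_def cv_def vec_eq_iff)

lemma frac_Icube: "y - cv (flv y) \<in> Icube"
  by (auto simp: Icube_def cv_def flv_def) linarith

lemma hclass_self: "r \<in> carrierBI \<Longrightarrow> r \<in> hclass r"
  unfolding hclass_def using h_rel_refl[of r] by simp

lemma hclass_Kset: "r \<in> carrierBI \<Longrightarrow> hclass r \<in> Kset"
  unfolding hclass_def Kset_def by (rule quotientI)

lemma hclass_mem: "c \<in> Kset \<Longrightarrow> r \<in> c \<Longrightarrow> hclass r = c"
proof -
  assume c: "c \<in> Kset" and r: "r \<in> c"
  from c obtain a where a: "a \<in> carrierBI" "c = h_rel `` {a}" unfolding Kset_def by (rule quotientE)
  then have "(a, r) \<in> h_rel" using r by simp
  then have "h_rel `` {a} = h_rel `` {r}" by (rule equiv_class_eq[OF equiv_h])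
  then show ?thesis using a unfolding hclass_def by simp
qed

lemma Kset_sub: "c \<in> Kset \<Longrightarrow> c \<subseteq> carrierBI"
  unfolding Kset_def hclass_def using equiv_h
  by (meson in_quotient_imp_subset)

lemma Kset_ne: "c \<in> Kset \<Longrightarrow> c \<noteq> {}"
  unfolding Kset_def using equiv_h by (meson in_quotient_imp_non_empty)

lemma hclass_eq: "(r, r') \<in> h_rel \<Longrightarrow> hclass r = hclass r'"
  unfolding hclass_def using equiv_h by (meson equiv_class_eq)

lemma hclass_eq_iff: "r \<in> carrierBI \<Longrightarrow> r' \<in> carrierBI \<Longrightarrow> hclass r = hclass r' \<longleftrightarrow> (r, r') \<in> h_rel"
  unfolding hclass_def using equiv_h by (meson eq_equiv_class_iff)

lemma Kset_disj: "c \<in> Kset \<Longrightarrow> c' \<in> Kset \<Longrightarrow> r \<in> c \<Longrightarrow> r \<in> c' \<Longrightarrow> c = c'"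
  using hclass_mem by metis

lemma sigma_rep_carrier: "r \<in> carrierBI \<Longrightarrow> sigma_rep x r \<in> carrierBI"
  by (cases r) (auto simp: carrierBI_def sigma_rep_eq ultra_shift frac_Icube)

lemma sigma_rep_resp: assumes "(r, r') \<in> h_rel" shows "sigma_rep x r = sigma_rep x r'"
proof -
  obtain p i where r: "r = (p, i)" by (cases r)
  obtain q j where r': "r' = (q, j)" by (cases r')
  from assms obtain d where c: "(p,i) \<in> carrierBI" "(q,j) \<in> carrierBI" and d: "q = shift d p" "j = i - cv d"
    unfolding r r' h_rel_iff by blast
  have i: "i \<in> Icube" "j \<in> Icube" using c by (auto simp: carrierBI_def)
  have e: "j + x = (i + x) - cv d" using d by simp
  show ?thesis unfolding r r' sigma_rep_eq[OF i(1)] sigma_rep_eq[OF i(2)] e flv_diff d(1) shift_shift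
    by (simp add: cv_diff)
qed

lemma sigma_wd: "c \<in> Kset \<Longrightarrow> r \<in> c \<Longrightarrow> sigma x c = hclass (sigma_rep x r)"
proof -
  assume c: "c \<in> Kset" and r: "r \<in> c"
  have s: "(SOME r. r \<in> c) \<in> c" using r by (rule someI)
  have "r \<in> hclass (SOME r. r \<in> c)" using hclass_mem[OF c s] r by simp
  then have "(SOME r. r \<in> c, r) \<in> h_rel" unfolding hclass_def by simp
  then show ?thesis unfolding sigma_def using sigma_rep_resp by metis
qed

lemma sigma_in: "c \<in> Kset \<Longrightarrow> sigma x c \<in> Kset"
proof -
  assume c: "c \<in> Kset"
  then obtain r where r: "r \<in> c" using Kset_ne by blast
  have rc: "r \<in> carrierBI" using r c Kset_sub by blast
  show ?thesis unfolding sigma_wd[OF c r] by (rule hclass_Kset[OF sigma_rep_carrier[OF rc]])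
qed

lemma sigma_0: "c \<in> Kset \<Longrightarrow> sigma 0 c = c"
proof -
  assume c: "c \<in> Kset"
  then obtain r where r: "r \<in> c" using Kset_ne by blast
  obtain p i where rr: "r = (p, i)" by (cases r)
  have rc: "r \<in> carrierBI" using r c Kset_sub by blast
  then have i: "i \<in> Icube" using rr by (auto simp: carrierBI_def)
  have "(r, sigma_rep 0 r) \<in> h_rel"
    using rc sigma_rep_carrier[OF rc, of 0] unfolding rr sigma_rep_eq[OF i] h_rel_iff by auto
  then show ?thesis using sigma_wd[OF c r] hclass_eq hclass_mem[OF c r] by metis
qed

lemma sigma_rep_add: assumes "r \<in> carrierBI" shows "sigma_rep g (sigma_rep h r) = sigma_rep (g + h) r"
proof -
  obtain p i where rr: "r = (p, i)" by (cases r)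
  have i: "i \<in> Icube" using assms rr by (auto simp: carrierBI_def)
  have e: "i + h - cv (flv (i + h)) + g = (i + (g + h)) - cv (flv (i + h))" by (simp add: algebra_simps)
  show ?thesis unfolding rr sigma_rep_eq[OF i] sigma_rep_eq[OF frac_Icube] e flv_diff shift_shift
    by (simp add: cv_diff)
qed

lemma sigma_add: "c \<in> Kset \<Longrightarrow> sigma (g + h) c = sigma g (sigma h c)"
proof -
  assume c: "c \<in> Kset"
  then obtain r where r: "r \<in> c" using Kset_ne by blast
  have rc: "r \<in> carrierBI" using r c Kset_sub by blast
  have s1: "sigma h c = hclass (sigma_rep h r)" using sigma_wd[OF c r] .
  have m: "sigma_rep h r \<in> sigma h c" unfolding s1 using hclass_self sigma_rep_carrier[OF rc] .
  have "sigma g (sigma h c) = hclass (sigma_rep g (sigma_rep h r))"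
    using sigma_wd[OF sigma_in[OF c] m] .
  then show ?thesis using sigma_wd[OF c r] sigma_rep_add[OF rc] by simp
qed



definition ults :: "'a set set set" where "ults = {U. ultrafilter_on U}"
definition bas :: "'a set \<Rightarrow> 'a set set set" where "bas A = {V. ultrafilter_on V \<and> A \<in> V}"

definition betaP :: "'a set set set \<Rightarrow> bool" where
  "betaP S \<longleftrightarrow> S \<subseteq> ults \<and> (\<forall>U\<in>S. \<exists>A\<in>U. bas A \<subseteq> S)"

lemma uf_up: "ultrafilter_on U \<Longrightarrow> A \<in> U \<Longrightarrow> A \<subseteq> B \<Longrightarrow> B \<in> U"
proof -
  assume "ultrafilter_on U"
  then have "\<forall>A B. A \<in> U \<longrightarrow> A \<subseteq> B \<longrightarrow> B \<in> U" unfolding ultrafilter_on_def by (elim conjE)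
  then show "A \<in> U \<Longrightarrow> A \<subseteq> B \<Longrightarrow> B \<in> U" by blast
qed
lemma uf_int: "ultrafilter_on U \<Longrightarrow> A \<in> U \<Longrightarrow> B \<in> U \<Longrightarrow> A \<inter> B \<in> U"
proof -
  assume "ultrafilter_on U"
  then have "\<forall>A B. A \<in> U \<longrightarrow> B \<in> U \<longrightarrow> A \<inter> B \<in> U" unfolding ultrafilter_on_def by (elim conjE)
  then show "A \<in> U \<Longrightarrow> B \<in> U \<Longrightarrow> A \<inter> B \<in> U" by blast
qed
lemma uf_compl: "ultrafilter_on U \<Longrightarrow> A \<in> U \<or> - A \<in> U"
proof -
  assume "ultrafilter_on U"
  then have "\<forall>A. A \<in> U \<or> - A \<in> U" unfolding ultrafilter_on_def by (elim conjE)
  then show "A \<in> U \<or> - A \<in> U" by blast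
qed
lemma uf_empty: "ultrafilter_on U \<Longrightarrow> {} \<notin> U"
  unfolding ultrafilter_on_def by (elim conjE)
lemma uf_UNIV: "ultrafilter_on U \<Longrightarrow> UNIV \<in> U"
  unfolding ultrafilter_on_def by (elim conjE)
lemma uf_not_both: "ultrafilter_on U \<Longrightarrow> A \<in> U \<Longrightarrow> - A \<in> U \<Longrightarrow> False"
  using uf_int[of U A "-A"] uf_empty[of U] by simp

lemma istop_beta: "istopology betaP"
  unfolding istopology_def
proof (intro conjI allI impI)
  fix S T :: "'a set set set" assume st: "betaP S" "betaP T"
  have sub: "S \<inter> T \<subseteq> ults" using st unfolding betaP_def by auto
  have "\<exists>A\<in>U. bas A \<subseteq> S \<inter> T" if U: "U \<in> S \<inter> T" for U
  proof -
    obtain A where A: "A \<in> U" "bas A \<subseteq> S" using st(1) U unfolding betaP_def by auto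
    obtain B where B: "B \<in> U" "bas B \<subseteq> T" using st(2) U unfolding betaP_def by auto
    have u: "ultrafilter_on U" using U sub by (auto simp: ults_def)
    have "bas (A \<inter> B) \<subseteq> bas A" "bas (A \<inter> B) \<subseteq> bas B" unfolding bas_def using uf_up
      by (auto intro: uf_up)
    then show ?thesis using A B uf_int[OF u A(1) B(1)] by (intro bexI[of _ "A \<inter> B"]) auto
  qed
  then show "betaP (S \<inter> T)" using sub unfolding betaP_def by blast
next
  fix K :: "'a set set set set" assume k: "\<forall>S\<in>K. betaP S"
  have sub: "\<Union>K \<subseteq> ults" using k unfolding betaP_def by auto
  have "\<exists>A\<in>U. bas A \<subseteq> \<Union>K" if U: "U \<in> \<Union>K" for U
  proof -
    obtain S where S: "S \<in> K" "U \<in> S" using U by auto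
    have "betaP S" using k S by blast
    then obtain A where "A \<in> U" "bas A \<subseteq> S" using S unfolding betaP_def by blast
    then show ?thesis using S by auto
  qed
  then show "betaP (\<Union>K)" using sub unfolding betaP_def by blast
qed

lemma beta_top_eq: "beta_top = topology betaP"
  unfolding beta_top_def betaP_def bas_def ults_def by simp

lemma openin_beta: "openin beta_top S \<longleftrightarrow> betaP S"
  unfolding beta_top_eq topology_inverse'[OF istop_beta] by (rule refl)

lemma open_bas: "openin beta_top (bas A)"
  unfolding openin_beta betaP_def bas_def ults_def by blast

lemma topspace_beta: "topspace beta_top = ults"
proof
  show "topspace beta_top \<subseteq> ults"
  proof
    fix x assume "x \<in> topspace beta_top"
    then obtain S where "openin beta_top S" "x \<in> S" unfolding topspace_def by blast
    then show "x \<in> ults" unfolding openin_beta betaP_def by blast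
  qed
  have "openin beta_top ults" unfolding openin_beta betaP_def
    by (auto simp: ults_def bas_def intro!: bexI[of _ UNIV] uf_UNIV)
  then show "ults \<subseteq> topspace beta_top" by (rule openin_subset)
qed

lemma Hausdorff_beta: "Hausdorff_space beta_top"
  unfolding Hausdorff_space_def topspace_beta
proof (intro allI impI)
  fix U V :: "'a set set" assume a: "U \<in> ults \<and> V \<in> ults \<and> U \<noteq> V"
  then have u: "ultrafilter_on U" "ultrafilter_on V" by (auto simp: ults_def)
  have "\<exists>A. A \<in> U \<and> - A \<in> V"
  proof (rule ccontr)
    assume n: "\<not> ?thesis"
    have "x \<in> V" if "x \<in> U" for x
    proof (rule ccontr)
      assume "x \<notin> V" then have "- x \<in> V" using uf_compl[OF u(2), of x] by simp
      then show False using n that by blast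
    qed
    moreover have "x \<in> U" if "x \<in> V" for x
    proof (rule ccontr)
      assume "x \<notin> U" then have "- x \<in> U" using uf_compl[OF u(1), of x] by simp
      then show False using n that by (metis double_compl)
    qed
    ultimately have "U = V" by blast
    then show False using a by blast
  qed
  then obtain A where A: "A \<in> U" "- A \<in> V" by blast
  have d: "disjnt (bas A) (bas (-A))" unfolding bas_def disjnt_def using uf_not_both by blast
  have "U \<in> bas A" "V \<in> bas (-A)" using A u by (auto simp: bas_def)
  then show "\<exists>S T. openin beta_top S \<and> openin beta_top T \<and> U \<in> S \<and> V \<in> T \<and> disjnt S T"
    using open_bas d by blast
qed

definition fip :: "'a set set \<Rightarrow> bool" where
  "fip G \<longleftrightarrow> (\<forall>H. finite H \<and> H \<subseteq> G \<longrightarrow> \<Inter>H \<noteq> {})"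

lemma fip_insert:
  assumes "fip M" "\<forall>H. finite H \<and> H \<subseteq> M \<longrightarrow> \<Inter>H \<inter> X \<noteq> {}"
  shows "fip (insert X M)"
  unfolding fip_def
proof (intro allI impI)
  fix H assume H: "finite H \<and> H \<subseteq> insert X M"
  have "\<Inter>(H - {X}) \<inter> X \<subseteq> \<Inter>H" by auto
  moreover have "finite (H - {X}) \<and> H - {X} \<subseteq> M" using H by auto
  then have "\<Inter>(H - {X}) \<inter> X \<noteq> {}" using assms(2) by blast
  ultimately show "\<Inter>H \<noteq> {}" by blast
qed

lemma not_fip_insert:
  assumes "fip M" "\<not> fip (insert X M)"
  obtains H where "finite H" "H \<subseteq> M" "\<Inter>H \<inter> X = {}"
  using fip_insert[OF assms(1), of X] assms(2) by blast

lemma fip_maximal_uf: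
  assumes f: "fip M" and mx: "\<And>X. fip (insert X M) \<Longrightarrow> X \<in> M"
  shows "ultrafilter_on M"
proof -
  have f': "\<Inter>H \<noteq> {}" if "finite H" "H \<subseteq> M" for H using f that unfolding fip_def by simp
  have up: "B \<in> M" if ab: "A \<in> M" "A \<subseteq> B" for A B
  proof (rule mx, rule fip_insert[OF f], intro allI impI)
    fix H assume h: "finite H \<and> H \<subseteq> M"
    then have "\<Inter>(insert A H) \<noteq> {}" using f'[of "insert A H"] ab by simp
    then show "\<Inter>H \<inter> B \<noteq> {}" using ab by auto
  qed
  have int: "A \<inter> B \<in> M" if ab: "A \<in> M" "B \<in> M" for A B
  proof (rule mx, rule fip_insert[OF f], intro allI impI)
    fix H assume h: "finite H \<and> H \<subseteq> M"
    then have "\<Inter>(insert A (insert B H)) \<noteq> {}" using f'[of "insert A (insert B H)"] ab by simp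
    then show "\<Inter>H \<inter> (A \<inter> B) \<noteq> {}" by auto
  qed
  have univ: "UNIV \<in> M"
  proof (rule mx, rule fip_insert[OF f], intro allI impI)
    fix H assume h: "finite H \<and> H \<subseteq> M"
    then show "\<Inter>H \<inter> UNIV \<noteq> {}" using f' by simp
  qed
  have emp: "{} \<notin> M" using f'[of "{{}}"] by auto
  have compl: "A \<in> M \<or> - A \<in> M" for A
  proof (rule ccontr)
    assume n: "\<not> (A \<in> M \<or> - A \<in> M)"
    have "\<not> fip (insert A M)"
    proof
      assume "fip (insert A M)" then have "A \<in> M" by (rule mx)
      then show False using n by simp
    qed
    then obtain H1 where H1: "finite H1" "H1 \<subseteq> M" "\<Inter>H1 \<inter> A = {}" using not_fip_insert[OF f] by blast
    have "\<not> fip (insert (-A) M)"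
    proof
      assume "fip (insert (-A) M)" then have "-A \<in> M" by (rule mx)
      then show False using n by simp
    qed
    then obtain H2 where H2: "finite H2" "H2 \<subseteq> M" "\<Inter>H2 \<inter> -A = {}" using not_fip_insert[OF f] by blast
    have "\<Inter>(H1 \<union> H2) = {}" using H1(3) H2(3) by auto
    moreover have "finite (H1 \<union> H2)" "H1 \<union> H2 \<subseteq> M" using H1 H2 by auto
    ultimately show False using f'[of "H1 \<union> H2"] by simp
  qed
  show ?thesis unfolding ultrafilter_on_def
  proof (intro conjI allI impI)
    show "UNIV \<in> M" by (rule univ)
    show "{} \<notin> M" by (rule emp)
    show "A \<in> M \<or> - A \<in> M" for A by (rule compl)
    show "A \<in> M \<Longrightarrow> A \<subseteq> B \<Longrightarrow> B \<in> M" for A B by (rule up)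
    show "A \<in> M \<Longrightarrow> B \<in> M \<Longrightarrow> A \<inter> B \<in> M" for A B by (rule int)
  qed
qed

lemma ultra_ext:
  fixes F :: "'a set set"
  assumes "fip F" shows "\<exists>U. ultrafilter_on U \<and> F \<subseteq> U"
proof -
  define AA where "AA = {G. F \<subseteq> G \<and> fip G}"
  have "\<exists>M\<in>AA. \<forall>X\<in>AA. M \<subseteq> X \<longrightarrow> X = M"
  proof (rule subset_Zorn_nonempty)
    show "AA \<noteq> {}" using assms unfolding AA_def by blast
    fix C assume C: "C \<noteq> {}" "subset.chain AA C"
    have CA: "C \<subseteq> AA" using C(2) unfolding subset.chain_def by (elim conjE)
    have "fip (\<Union>C)" unfolding fip_def
    proof (intro allI impI)
      fix H assume H: "finite H \<and> H \<subseteq> \<Union>C"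
      obtain B where B: "B \<in> C" "H \<subseteq> B"
        using finite_subset_Union_chain[of H C AA] H C by metis
      have "fip B" using B(1) CA unfolding AA_def by auto
      then show "\<Inter>H \<noteq> {}" using H B(2) unfolding fip_def by blast
    qed
    moreover obtain G where "G \<in> C" using C(1) by blast
    then have "F \<subseteq> \<Union>C" using CA unfolding AA_def by auto
    ultimately show "\<Union>C \<in> AA" unfolding AA_def by blast
  qed
  then obtain M where M: "M \<in> AA" and mx: "\<forall>X\<in>AA. M \<subseteq> X \<longrightarrow> X = M" by blast
  have M': "F \<subseteq> M" "fip M" using M unfolding AA_def by auto
  have "ultrafilter_on M"
  proof (rule fip_maximal_uf[OF M'(2)])
    fix X assume "fip (insert X M)"
    then have "insert X M \<in> AA" using M'(1) unfolding AA_def by auto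
    then have "insert X M = M" using mx by blast
    then show "X \<in> M" by blast
  qed
  then show ?thesis using M'(1) by blast
qed




lemma uf_finite_union: "finite H \<Longrightarrow> ultrafilter_on U \<Longrightarrow> \<Union>H \<in> U \<Longrightarrow> \<exists>A\<in>H. A \<in> U"
proof (induction H rule: finite_induct)
  case empty
  then have "{} \<in> U" by simp
  then show ?case using uf_empty[OF empty.prems(1)] by simp
next
  case (insert A H)
  have u: "ultrafilter_on U" by (rule insert.prems(1))
  show ?case
  proof (cases "A \<in> U")
    case True
    then show ?thesis by simp
  next
    case False
    then have c: "- A \<in> U" using uf_compl[OF u, of A] by simp
    have "(A \<union> \<Union>H) \<inter> - A \<in> U" using uf_int[OF u _ c] insert.prems(2) by simp
    moreover have "(A \<union> \<Union>H) \<inter> - A \<subseteq> \<Union>H" by blast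
    ultimately have "\<Union>H \<in> U" by (rule uf_up[OF u])
    then have "\<exists>A\<in>H. A \<in> U" by (rule insert.IH[OF u])
    then show ?thesis by simp
  qed
qed

lemma compact_beta: "compact_space beta_top"
  unfolding compact_space_def compactin_def topspace_beta
proof (intro conjI allI impI subset_refl)
  fix \<U> :: "'a set set set set" assume U: "(\<forall>U\<in>\<U>. openin beta_top U) \<and> ults \<subseteq> \<Union>\<U>"
  show "\<exists>\<F>. finite \<F> \<and> \<F> \<subseteq> \<U> \<and> ults \<subseteq> \<Union>\<F>"
  proof (rule ccontr)
    assume nf: "\<not> ?thesis"
    define Aset where "Aset = {A. \<exists>V\<in>\<U>. bas A \<subseteq> V}"
    have "fip (uminus ` Aset)" unfolding fip_def
    proof (intro allI impI notI)
      fix H assume H: "finite H \<and> H \<subseteq> uminus ` Aset" and e: "\<Inter>H = {}"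
      have h1: "finite H" "H \<subseteq> uminus ` Aset" using H by simp_all
      have "\<exists>C\<subseteq>Aset. finite C \<and> H = uminus ` C"
        by (rule finite_subset_image[OF h1(1) h1(2)])
      then obtain H' where H': "H' \<subseteq> Aset" "finite H'" "H = uminus ` H'" by (elim exE conjE)
      have un: "\<Union>H' = UNIV" using e H'(3) by auto
      have "\<forall>A\<in>H'. \<exists>V. V \<in> \<U> \<and> bas A \<subseteq> V" using H'(1) unfolding Aset_def by blast
      then have "\<exists>V. \<forall>A\<in>H'. V A \<in> \<U> \<and> bas A \<subseteq> V A" by (rule bchoice)
      then obtain V where V: "\<forall>A\<in>H'. V A \<in> \<U> \<and> bas A \<subseteq> V A" by (elim exE)
      have "ults \<subseteq> \<Union>(V ` H')"
      proof
        fix W :: "'a set set" assume "W \<in> ults"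
        then have w: "ultrafilter_on W" by (simp add: ults_def)
        have "\<Union>H' \<in> W" using un uf_UNIV[OF w] by simp
        then obtain A where A: "A \<in> H'" "A \<in> W" using uf_finite_union[OF H'(2) w] by blast
        then have "W \<in> bas A" using w by (simp add: bas_def)
        then have "W \<in> V A" using V A(1) by blast
        then show "W \<in> \<Union>(V ` H')" using A(1) by blast
      qed
      moreover have "finite (V ` H')" using H'(2) by simp
      moreover have "V ` H' \<subseteq> \<U>" using V by blast
      ultimately have "\<exists>\<F>. finite \<F> \<and> \<F> \<subseteq> \<U> \<and> ults \<subseteq> \<Union>\<F>"
        by (intro exI[of _ "V ` H'"] conjI)
      with nf show False by (rule notE)
    qed
    then obtain W where W: "ultrafilter_on W" "uminus ` Aset \<subseteq> W" using ultra_ext by blast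
    have "W \<in> ults" using W(1) by (simp add: ults_def)
    then obtain V where V: "V \<in> \<U>" "W \<in> V" using U by blast
    then have "betaP V" using U openin_beta by blast
    then obtain A where A: "A \<in> W" "bas A \<subseteq> V" using V unfolding betaP_def by blast
    then have "A \<in> Aset" using V(1) unfolding Aset_def by blast
    then have "- A \<in> W" using W(2) by blast
    then show False using uf_not_both[OF W(1) A(1)] by blast
  qed
qed

lemma shift_cont: fixes d :: "int^'n" shows "continuous_map beta_top beta_top (shift d)"
  unfolding continuous_map_def topspace_beta
proof (intro conjI allI impI)
  show "shift d \<in> ults \<rightarrow> ults" using ultra_shift by (auto simp: ults_def)
  fix S :: "(int^'n) set set set" assume "openin beta_top S"
  then have S: "betaP S" by (simp add: openin_beta)
  show "openin beta_top {x \<in> ults. shift d x \<in> S}" unfolding openin_beta betaP_def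
  proof (intro conjI ballI)
    fix U assume U: "U \<in> {x \<in> ults. shift d x \<in> S}"
    then obtain A where A: "A \<in> shift d U" "bas A \<subseteq> S" using S unfolding betaP_def by blast
    let ?A = "{z. z + d \<in> A}"
    have "?A \<in> U" using A by (simp add: shift_def)
    moreover have "bas ?A \<subseteq> {x \<in> ults. shift d x \<in> S}"
    proof
      fix x assume x: "x \<in> bas ?A"
      then have "shift d x \<in> bas A" using ultra_shift by (auto simp: bas_def shift_def)
      then show "x \<in> {x \<in> ults. shift d x \<in> S}" using A(2) x by (auto simp: bas_def ults_def)
    qed
    ultimately show "\<exists>A\<in>U. bas A \<subseteq> {x \<in> ults. shift d x \<in> S}" by blast
  qed auto
qed



abbreviation XT :: "((int^'n) set set \<times> (real^'n)) topology" where
  "XT \<equiv> prod_topology beta_top (top_of_set Icube)"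

lemma topspace_XT: "topspace XT = carrierBI"
  by (simp add: topspace_beta carrierBI_def ults_def)

lemma Icube_eq: "Icube = {0::real^'n .. 1}"
  by (auto simp: Icube_def less_eq_vec_def)

lemma compact_Icube: "compact (Icube :: (real^'n) set)"
  unfolding Icube_eq interval_cbox_cart by (rule compact_cbox)

lemma compact_XT: "compact_space XT"
  using compact_space_prod_topology compact_beta compact_Icube
  by (metis compact_space_subtopology compactin_euclidean_iff)

lemma Hausdorff_XT: "Hausdorff_space XT"
  using Hausdorff_space_prod_topology Hausdorff_beta
  by (metis Hausdorff_space_euclidean Hausdorff_space_subtopology)

definition Kp :: "((int^'n) set set \<times> (real^'n)) set set \<Rightarrow> bool" where
  "Kp S \<longleftrightarrow> S \<subseteq> Kset \<and> openin XT (\<Union>S)"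

lemma Union_Int_K: "S \<subseteq> Kset \<Longrightarrow> T \<subseteq> Kset \<Longrightarrow> \<Union>(S \<inter> T) = \<Union>S \<inter> \<Union>T"
proof
  assume "S \<subseteq> Kset" "T \<subseteq> Kset"
  show "\<Union>S \<inter> \<Union>T \<subseteq> \<Union>(S \<inter> T)"
  proof
    fix r assume "r \<in> \<Union>S \<inter> \<Union>T"
    then obtain c d where "c \<in> S" "d \<in> T" "r \<in> c" "r \<in> d" by blast
    then have "c = d" using Kset_disj \<open>S \<subseteq> Kset\<close> \<open>T \<subseteq> Kset\<close> by blast
    then show "r \<in> \<Union>(S \<inter> T)" using \<open>c \<in> S\<close> \<open>d \<in> T\<close> \<open>r \<in> c\<close> by blast
  qed
qed blast

lemma istop_K: "istopology Kp"
  unfolding istopology_def Kp_def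
proof (intro conjI allI impI)
  fix S T :: "((int^'n) set set \<times> (real^'n)) set set"
  assume s: "S \<subseteq> Kset \<and> openin XT (\<Union>S)" and t: "T \<subseteq> Kset \<and> openin XT (\<Union>T)"
  show "S \<inter> T \<subseteq> Kset" using s by blast
  show "openin XT (\<Union>(S \<inter> T))" using s t Union_Int_K[of S T] by (simp add: openin_Int)
next
  fix KK :: "((int^'n) set set \<times> (real^'n)) set set set"
  assume k: "\<forall>S\<in>KK. S \<subseteq> Kset \<and> openin XT (\<Union>S)"
  show "\<Union>KK \<subseteq> Kset" using k by blast
  have "\<Union>(\<Union>KK) = \<Union>(Union ` KK)" by blast
  moreover have "openin XT (\<Union>(Union ` KK))" using k by (intro openin_Union) blast
  ultimately show "openin XT (\<Union>(\<Union>KK))" by simp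
qed

lemma K_top_eq: "K_top = topology Kp"
  unfolding K_top_def Kp_def by simp

lemma openin_K: "openin K_top S \<longleftrightarrow> S \<subseteq> Kset \<and> openin XT (\<Union>S)"
  unfolding K_top_eq topology_inverse'[OF istop_K] Kp_def by (rule refl)

lemma Union_Kset: "\<Union>Kset = carrierBI"
  unfolding Kset_def using equiv_h by (rule Union_quotient)

lemma topspace_K: "topspace K_top = Kset"
proof
  show "topspace K_top \<subseteq> Kset"
  proof
    fix x assume "x \<in> topspace K_top"
    then obtain S where "openin K_top S" "x \<in> S" unfolding topspace_def by blast
    then show "x \<in> Kset" unfolding openin_K by blast
  qed
  have "openin K_top Kset" unfolding openin_K Union_Kset
    using openin_topspace[of XT] unfolding topspace_XT by simp
  then show "Kset \<subseteq> topspace K_top" by (rule openin_subset)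
qed

definition sat :: "((int^'n) set set \<times> (real^'n)) set \<Rightarrow> ((int^'n) set set \<times> (real^'n)) set" where
  "sat C = h_rel `` C"

definition Dfin :: "(int^'n) set" where "Dfin = {d. \<forall>k. d$k \<in> {-1,0,1}}"

lemma finite_vec_box:
  assumes "\<And>k. finite (S k)" shows "finite {v :: 'a^'n. \<forall>k. v$k \<in> S k}"
proof -
  have "{v :: 'a^'n. \<forall>k. v$k \<in> S k} \<subseteq> vec_lambda ` (PiE UNIV S)"
  proof
    fix v :: "'a^'n" assume "v \<in> {v. \<forall>k. v$k \<in> S k}"
    then have "vec_nth v \<in> PiE UNIV S" by auto
    moreover have "v = vec_lambda (vec_nth v)" by simp
    ultimately show "v \<in> vec_lambda ` (PiE UNIV S)" by blast
  qed
  moreover have "finite (PiE UNIV S)" using assms by (intro finite_PiE) auto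
  ultimately show ?thesis using finite_subset by blast
qed

lemma finite_Dfin: "finite Dfin"
  unfolding Dfin_def by (rule finite_vec_box) simp

definition Tm :: "int^'n \<Rightarrow> (int^'n) set set \<times> (real^'n) \<Rightarrow> (int^'n) set set \<times> (real^'n)" where
  "Tm d r = (shift d (fst r), snd r - cv d)"

definition Dd :: "int^'n \<Rightarrow> ((int^'n) set set \<times> (real^'n)) set" where
  "Dd d = {r \<in> carrierBI. snd r - cv d \<in> Icube}"

lemma d_in_Dfin:
  assumes "i \<in> Icube" "i - cv d \<in> Icube" shows "d \<in> Dfin"
proof -
  have ii: "0 \<le> i$k" "i$k \<le> 1" "0 \<le> i$k - of_int (d$k)" "i$k - of_int (d$k) \<le> 1" for k
    using assms by (auto simp: Icube_def cv_def)
  have "d$k \<in> {-1,0,1}" for k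
  proof -
    have "of_int (d$k) \<le> (1::real)" "-1 \<le> (of_int (d$k)::real)" using ii[of k] by linarith+
    then have "d$k \<le> 1" "-1 \<le> d$k" by linarith+
    then show ?thesis by auto
  qed
  then show ?thesis by (simp add: Dfin_def)
qed

lemma sat_eq: "C \<subseteq> carrierBI \<Longrightarrow> sat C = (\<Union>d\<in>Dfin. Tm d ` (C \<inter> Dd d))"
proof
  assume C: "C \<subseteq> carrierBI"
  show "sat C \<subseteq> (\<Union>d\<in>Dfin. Tm d ` (C \<inter> Dd d))"
  proof
    fix r' assume "r' \<in> sat C"
    then obtain r where r: "r \<in> C" "(r, r') \<in> h_rel" unfolding sat_def by blast
    obtain p i q j where pq: "r = (p, i)" "r' = (q, j)" by (cases r, cases r')
    obtain d where d: "(p,i) \<in> carrierBI" "(q,j) \<in> carrierBI" "q = shift d p" "j = i - cv d"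
      using r(2) unfolding pq h_rel_iff by blast
    have "d \<in> Dfin" using d by (intro d_in_Dfin) (auto simp: carrierBI_def)
    moreover have "r \<in> Dd d" using d pq by (auto simp: Dd_def carrierBI_def)
    moreover have "r' = Tm d r" using d pq by (simp add: Tm_def)
    ultimately show "r' \<in> (\<Union>d\<in>Dfin. Tm d ` (C \<inter> Dd d))" using r(1) by blast
  qed
  show "(\<Union>d\<in>Dfin. Tm d ` (C \<inter> Dd d)) \<subseteq> sat C"
  proof
    fix r' assume "r' \<in> (\<Union>d\<in>Dfin. Tm d ` (C \<inter> Dd d))"
    then obtain d r where r: "r \<in> C" "r \<in> Dd d" "r' = Tm d r" by blast
    obtain p i where pq: "r = (p, i)" by (cases r)
    have "(r, r') \<in> h_rel" using r pq unfolding h_rel_iff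
      by (auto simp: Tm_def Dd_def h_rel_iff carrierBI_def ultra_shift)
    then show "r' \<in> sat C" using r unfolding sat_def by blast
  qed
qed



lemma cont_snd_eu: "continuous_map XT euclidean snd"
  by (rule continuous_map_into_fulltopology[OF continuous_map_snd])

lemma cont_snd_minus: "continuous_map XT euclidean (\<lambda>r. snd r - c)"
  by (intro continuous_map_diff cont_snd_eu) simp

lemma closed_Icube: "closed (Icube :: (real^'n) set)"
  by (rule compact_imp_closed[OF compact_Icube])

lemma closed_Dd: "closedin XT (Dd d)"
proof -
  have "closedin XT {r \<in> topspace XT. snd r - cv d \<in> Icube}"
    by (rule closedin_continuous_map_preimage[OF cont_snd_minus]) (simp add: closed_Icube)
  moreover have "{r \<in> topspace XT. snd r - cv d \<in> Icube} = Dd d"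
    unfolding topspace_XT Dd_def by simp
  ultimately show ?thesis by simp
qed

lemma cont_Tm: "continuous_map (subtopology XT (Dd d)) XT (Tm d)"
  unfolding continuous_map_pairwise
proof
  have "fst \<circ> Tm d = shift d \<circ> fst" by (auto simp: Tm_def)
  moreover have "continuous_map (subtopology XT (Dd d)) beta_top (shift d \<circ> fst)"
    by (intro continuous_map_compose[OF _ shift_cont] continuous_map_from_subtopology continuous_map_fst)
  ultimately show "continuous_map (subtopology XT (Dd d)) beta_top (fst \<circ> Tm d)" by simp
  have "snd \<circ> Tm d = (\<lambda>r. snd r - cv d)" by (auto simp: Tm_def)
  moreover have "continuous_map (subtopology XT (Dd d)) (top_of_set Icube) (\<lambda>r. snd r - cv d)"
    unfolding continuous_map_in_subtopology
  proof
    show "continuous_map (subtopology XT (Dd d)) euclidean (\<lambda>r. snd r - cv d)"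
      by (intro continuous_map_from_subtopology cont_snd_minus)
    show "(\<lambda>r. snd r - cv d) \<in> topspace (subtopology XT (Dd d)) \<rightarrow> Icube"
      by (auto simp: Dd_def)
  qed
  ultimately show "continuous_map (subtopology XT (Dd d)) (top_of_set Icube) (snd \<circ> Tm d)" by simp
qed

lemma closed_sat: assumes C: "closedin XT C" shows "closedin XT (sat C)"
proof -
  have Csub: "C \<subseteq> carrierBI" using closedin_subset[OF C] unfolding topspace_XT .
  have "closedin XT (Tm d ` (C \<inter> Dd d))" for d
  proof -
    have "compactin XT (C \<inter> Dd d)"
      by (intro closedin_compact_space compact_XT closedin_Int C closed_Dd)
    then have "compactin (subtopology XT (Dd d)) (C \<inter> Dd d)"
      by (simp add: compactin_subtopology)
    then have "compactin XT (Tm d ` (C \<inter> Dd d))"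
      by (rule image_compactin[OF _ cont_Tm])
    then show ?thesis by (rule compactin_imp_closedin[OF Hausdorff_XT])
  qed
  then have "closedin XT (\<Union>d\<in>Dfin. Tm d ` (C \<inter> Dd d))"
    by (intro closedin_Union finite_imageI finite_Dfin) blast
  then show ?thesis using sat_eq[OF Csub] by simp
qed

definition saturated :: "((int^'n) set set \<times> (real^'n)) set \<Rightarrow> bool" where
  "saturated V \<longleftrightarrow> (\<forall>r r'. r \<in> V \<longrightarrow> (r, r') \<in> h_rel \<longrightarrow> r' \<in> V)"

lemma sat_nbhd:
  assumes V: "openin XT V" and c: "c \<in> Kset" "c \<subseteq> V"
  shows "\<exists>V'. openin XT V' \<and> c \<subseteq> V' \<and> V' \<subseteq> V \<and> saturated V'"
proof -
  define V' where "V' = topspace XT - sat (topspace XT - V)"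
  have "closedin XT (topspace XT - V)" using V by blast
  then have o: "openin XT V'" unfolding V'_def using closed_sat by blast
  have s1: "V' \<subseteq> V"
  proof
    fix x assume x: "x \<in> V'"
    show "x \<in> V"
    proof (rule ccontr)
      assume "x \<notin> V"
      moreover have "x \<in> carrierBI" using x topspace_XT unfolding V'_def by blast
      ultimately have "x \<in> sat (topspace XT - V)" unfolding sat_def topspace_XT using h_rel_refl by blast
      then show False using x unfolding V'_def by blast
    qed
  qed
  have s2: "c \<subseteq> V'"
  proof
    fix r assume r: "r \<in> c"
    have rc: "r \<in> carrierBI" using r c(1) Kset_sub by blast
    have "r \<notin> sat (topspace XT - V)"
    proof
      assume "r \<in> sat (topspace XT - V)"
      then obtain r0 where r0: "r0 \<notin> V" "(r0, r) \<in> h_rel" unfolding sat_def by blast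
      have "(r, r0) \<in> h_rel" using r0(2) equiv_h unfolding equiv_def sym_def by blast
      then have "r0 \<in> hclass r" unfolding hclass_def by simp
      then have "r0 \<in> c" using hclass_mem[OF c(1) r] by simp
      then show False using r0(1) c(2) by blast
    qed
    then show "r \<in> V'" unfolding V'_def topspace_XT using rc by blast
  qed
  have s3: "saturated V'" unfolding saturated_def
  proof (intro allI impI)
    fix r r' assume r: "r \<in> V'" and rr: "(r, r') \<in> h_rel"
    have r'c: "r' \<in> carrierBI" using rr h_rel_carrier by blast
    show "r' \<in> V'"
    proof (rule ccontr)
      assume "r' \<notin> V'"
      then have "r' \<in> sat (topspace XT - V)" unfolding V'_def topspace_XT using r'c by blast
      then obtain r0 where r0: "r0 \<in> topspace XT - V" "(r0, r') \<in> h_rel" unfolding sat_def by blast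
      have "(r', r) \<in> h_rel" using rr equiv_h unfolding equiv_def sym_def by blast
      then have "(r0, r) \<in> h_rel" using r0(2) equiv_h unfolding equiv_def trans_def by blast
      then have "r \<in> sat (topspace XT - V)" using r0(1) unfolding sat_def by blast
      then show False using r unfolding V'_def by blast
    qed
  qed
  show ?thesis using o s1 s2 s3 by blast
qed

lemma Union_sat_K:
  assumes "saturated V" "V \<subseteq> carrierBI"
  shows "\<Union>{c \<in> Kset. c \<subseteq> V} = V"
proof
  show "\<Union>{c \<in> Kset. c \<subseteq> V} \<subseteq> V" by blast
  show "V \<subseteq> \<Union>{c \<in> Kset. c \<subseteq> V}"
  proof
    fix r assume r: "r \<in> V"
    then have rc: "r \<in> carrierBI" using assms(2) by blast
    have "hclass r \<subseteq> V" using assms(1) r unfolding saturated_def hclass_def by blast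
    moreover have "hclass r \<in> Kset" by (rule hclass_Kset[OF rc])
    moreover have "r \<in> hclass r" by (rule hclass_self[OF rc])
    ultimately show "r \<in> \<Union>{c \<in> Kset. c \<subseteq> V}" by blast
  qed
qed

lemma openin_K_sat:
  assumes "openin XT V" "saturated V"
  shows "openin K_top {c \<in> Kset. c \<subseteq> V}"
proof -
  have "V \<subseteq> carrierBI" using openin_subset[OF assms(1)] unfolding topspace_XT .
  then show ?thesis unfolding openin_K using Union_sat_K[OF assms(2)] assms(1) by simp
qed

lemma cont_hclass: "continuous_map XT K_top hclass"
  unfolding continuous_map_def topspace_K topspace_XT
proof (intro conjI allI impI)
  show "hclass \<in> carrierBI \<rightarrow> Kset" using hclass_Kset by blast
  fix S :: "((int^'n) set set \<times> (real^'n)) set set" assume S: "openin K_top S"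
  then have S': "S \<subseteq> Kset" "openin XT (\<Union>S)" unfolding openin_K by auto
  have "{x \<in> carrierBI. hclass x \<in> S} = \<Union>S"
  proof
    show "{x \<in> carrierBI. hclass x \<in> S} \<subseteq> \<Union>S" using hclass_self by blast
    show "\<Union>S \<subseteq> {x \<in> carrierBI. hclass x \<in> S}"
    proof
      fix r assume "r \<in> \<Union>S"
      then obtain c where c: "c \<in> S" "r \<in> c" by blast
      then have "c \<in> Kset" using S' by blast
      then show "r \<in> {x \<in> carrierBI. hclass x \<in> S}" using c hclass_mem Kset_sub by blast
    qed
  qed
  then show "openin XT {x \<in> carrierBI. hclass x \<in> S}" using S' by simp
qed

lemma hclass_image: "hclass ` carrierBI = Kset"
proof
  show "hclass ` carrierBI \<subseteq> Kset" using hclass_Kset by blast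
  show "Kset \<subseteq> hclass ` carrierBI"
  proof
    fix c assume c: "c \<in> Kset"
    then obtain r where r: "r \<in> c" using Kset_ne by blast
    then have "r \<in> carrierBI" using c Kset_sub by blast
    moreover have "c = hclass r" using hclass_mem[OF c r] by simp
    ultimately show "c \<in> hclass ` carrierBI" by blast
  qed
qed

lemma compact_K: "compact_space K_top"
proof -
  have "compactin K_top (hclass ` topspace XT)"
    using image_compactin[OF _ cont_hclass] compact_XT unfolding compact_space_def by blast
  then show ?thesis unfolding compact_space_def topspace_K topspace_XT hclass_image .
qed

lemma class_compact: assumes "c \<in> Kset" shows "compactin XT c"
proof -
  obtain r where r: "r \<in> c" using Kset_ne assms by blast
  have rc: "r \<in> carrierBI" using r assms Kset_sub by blast
  have "closedin XT {r}"
    by (rule closedin_t1_singleton[OF Hausdorff_imp_t1_space[OF Hausdorff_XT]]) (unfold topspace_XT, simp add: rc)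
  then have "closedin XT (sat {r})" by (rule closed_sat)
  moreover have "sat {r} = c" using hclass_mem[OF assms r] unfolding sat_def hclass_def by simp
  ultimately show ?thesis using closedin_compact_space[OF compact_XT] by simp
qed

lemma Hausdorff_K: "Hausdorff_space K_top"
  unfolding Hausdorff_space_def topspace_K
proof (intro allI impI)
  fix c1 c2 assume a: "c1 \<in> Kset \<and> c2 \<in> Kset \<and> c1 \<noteq> c2"
  have "disjnt c1 c2" using a Kset_disj unfolding disjnt_def by blast
  then obtain U1 U2 where U: "openin XT U1" "openin XT U2" "c1 \<subseteq> U1" "c2 \<subseteq> U2" "disjnt U1 U2"
    using Hausdorff_XT[unfolded Hausdorff_space_compact_sets] class_compact a by meson
  obtain V1 where V1: "openin XT V1" "c1 \<subseteq> V1" "V1 \<subseteq> U1" "saturated V1"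
    using sat_nbhd[OF U(1) _ U(3)] a by blast
  obtain V2 where V2: "openin XT V2" "c2 \<subseteq> V2" "V2 \<subseteq> U2" "saturated V2"
    using sat_nbhd[OF U(2) _ U(4)] a by blast
  have "disjnt {c \<in> Kset. c \<subseteq> V1} {c \<in> Kset. c \<subseteq> V2}"
    using V1(3) V2(3) U(5) Kset_ne unfolding disjnt_def by blast
  then show "\<exists>S T. openin K_top S \<and> openin K_top T \<and> c1 \<in> S \<and> c2 \<in> T \<and> disjnt S T"
    using openin_K_sat[OF V1(1) V1(4)] openin_K_sat[OF V2(1) V2(4)] V1 V2 a by blast
qed



abbreviation YT :: "((int^'n) set set \<times> (real^'n)) topology" where
  "YT \<equiv> prod_topology beta_top euclidean"

lemma XT_sub: "XT = subtopology YT (ults \<times> Icube)"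
  by (subst prod_topology_subtopology(2)) (simp add: topspace_beta)

lemma topspace_YT: "topspace YT = ults \<times> UNIV"
  by (simp add: topspace_beta)

lemma cont_Ym: "continuous_map YT YT (\<lambda>r. (shift m (fst r), snd r - cv m))"
  unfolding continuous_map_pairwise o_def fst_conv snd_conv
proof
  show "continuous_map YT beta_top (\<lambda>x. shift m (fst x))"
    using continuous_map_compose[OF continuous_map_fst shift_cont] by (simp add: o_def)
  show "continuous_map YT euclidean (\<lambda>x. snd x - cv m)"
    by (intro continuous_map_diff continuous_map_snd) simp
qed

lemma open_box0:
  fixes a b :: "'n::finite \<Rightarrow> real"
  shows "open {y::real^'n. \<forall>k. a k < y$k \<and> y$k < b k}"
proof -
  have "{y::real^'n. \<forall>k. a k < y$k \<and> y$k < b k} = (\<Inter>k. {y. a k < y$k} \<inter> {y. y$k < b k})" by auto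
  moreover have "open (\<Inter>k. {y::real^'n. a k < y$k} \<inter> {y. y$k < b k})"
    by (intro open_INT ballI open_Int open_halfspace_component_lt_cart open_halfspace_component_gt_cart) simp
  ultimately show ?thesis by simp
qed

lemma openin_Q:
  fixes W :: "((int^'n::finite) set set \<times> (real^'n)) set"
  assumes W: "openin XT W" "saturated W"
  shows "openin YT {(p, y). p \<in> ults \<and> (shift (flv y) p, y - cv (flv y)) \<in> W}"
    (is "openin YT ?Q")
  unfolding openin_subopen[of YT ?Q]
proof (intro ballI)
  fix x :: "(int^'n) set set \<times> (real^'n)" assume x: "x \<in> ?Q"
  obtain p0 y0 where x0: "x = (p0, y0)" by (cases x)
  have p0: "p0 \<in> ults" and w0: "(shift (flv y0) p0, y0 - cv (flv y0)) \<in> W" using x x0 by auto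
  obtain W' where W': "openin YT W'" "W = W' \<inter> (ults \<times> Icube)"
    using W(1) unfolding XT_sub openin_subtopology by blast
  define M0 where "M0 = {m :: int^'n. \<forall>k. m$k \<in> {\<lceil>y0$k\<rceil> - 1 .. \<lfloor>y0$k\<rfloor>}}"
  have fM0: "finite M0" unfolding M0_def by (rule finite_vec_box) simp
  define N where "N m = {r \<in> topspace YT. (shift m (fst r), snd r - cv m) \<in> W'}" for m
  have oN: "openin YT (N m)" for m
    unfolding N_def by (rule openin_continuous_map_preimage[OF cont_Ym W'(1)])
  define B0 where "B0 = {y::real^'n. \<forall>k. of_int (\<lceil>y0$k\<rceil> - 1) < y$k \<and> y$k < of_int (\<lfloor>y0$k\<rfloor> + 1)}"
  have oB0: "openin YT (ults \<times> B0)"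
  proof -
    have "open B0" unfolding B0_def by (rule open_box0)
    moreover have "openin beta_top (ults :: (int^'n) set set set)" using openin_topspace[of beta_top] unfolding topspace_beta .
    ultimately show ?thesis unfolding openin_prod_Times_iff by simp
  qed
  define T where "T = (ults \<times> B0) \<inter> \<Inter>(N ` M0)"
  have oT: "openin YT T" unfolding T_def
    by (rule openin_Int_Inter) (use fM0 oB0 oN in auto)
  have y0B: "y0 \<in> B0" unfolding B0_def mem_Collect_eq
  proof
    fix k
    have "of_int \<lceil>y0$k\<rceil> < y0$k + 1" by linarith
    moreover have "y0$k < of_int \<lfloor>y0$k\<rfloor> + 1" by linarith
    ultimately show "of_int (\<lceil>y0$k\<rceil> - 1) < y0$k \<and> y0$k < of_int (\<lfloor>y0$k\<rfloor> + 1)" by simp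
  qed
  have inN: "(p0, y0) \<in> N m" if m: "m \<in> M0" for m
  proof -
    have mk: "\<lceil>y0$k\<rceil> - 1 \<le> m$k" "m$k \<le> \<lfloor>y0$k\<rfloor>" for k using m unfolding M0_def by auto
    have "0 \<le> (y0 - cv m)$k \<and> (y0 - cv m)$k \<le> 1" for k
    proof -
      have "of_int (m$k) \<le> y0$k" using mk(2)[of k] by (simp add: le_floor_iff)
      moreover
      have "\<lceil>y0$k\<rceil> \<le> m$k + 1" using mk(1)[of k] by simp
      then have "y0$k \<le> of_int (m$k + 1)" by (simp only: ceiling_le_iff)
      then have "y0$k \<le> of_int (m$k) + 1" by simp
      ultimately show ?thesis by (simp add: cv_def)
    qed
    then have "y0 - cv m \<in> Icube" unfolding Icube_def by simp
    then have rel: "((shift (flv y0) p0, y0 - cv (flv y0)), (shift m p0, y0 - cv m)) \<in> h_rel"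
      unfolding h_rel_iff using p0 frac_Icube[of y0] ultra_shift
      by (auto simp: carrierBI_def ults_def shift_shift cv_diff intro!: exI[of _ "m - flv y0"])
    then have "(shift m p0, y0 - cv m) \<in> W" using W(2) w0 unfolding saturated_def by blast
    then show ?thesis unfolding N_def using W'(2) p0 by (simp add: topspace_beta)
  qed
  have xT: "x \<in> T" unfolding T_def x0 using p0 y0B inN by blast
  have TQ: "T \<subseteq> ?Q"
  proof
    fix z assume z: "z \<in> T"
    obtain p y where zz: "z = (p, y)" by (cases z)
    have p: "p \<in> ults" and yB: "y \<in> B0" using z zz unfolding T_def by auto
    have "\<lceil>y0$k\<rceil> - 1 \<le> \<lfloor>y$k\<rfloor> \<and> \<lfloor>y$k\<rfloor> \<le> \<lfloor>y0$k\<rfloor>" for k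
    proof
      have "of_int (\<lceil>y0$k\<rceil> - 1) < y$k" using yB unfolding B0_def by blast
      then show "\<lceil>y0$k\<rceil> - 1 \<le> \<lfloor>y$k\<rfloor>" unfolding le_floor_iff by linarith
      have "y$k < of_int (\<lfloor>y0$k\<rfloor> + 1)" using yB unfolding B0_def by blast
      then have "\<lfloor>y$k\<rfloor> < \<lfloor>y0$k\<rfloor> + 1" unfolding floor_less_iff .
      then show "\<lfloor>y$k\<rfloor> \<le> \<lfloor>y0$k\<rfloor>" by linarith
    qed
    then have "flv y \<in> M0" unfolding M0_def flv_def by simp
    then have "z \<in> N (flv y)" using z unfolding T_def by blast
    then have "(shift (flv y) p, y - cv (flv y)) \<in> W'" unfolding N_def zz by simp
    moreover have "(shift (flv y) p, y - cv (flv y)) \<in> ults \<times> Icube"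
      using p ultra_shift frac_Icube by (auto simp: ults_def)
    ultimately have "(shift (flv y) p, y - cv (flv y)) \<in> W" using W'(2) by blast
    then show "z \<in> ?Q" using zz p by simp
  qed
  show "\<exists>T. openin YT T \<and> x \<in> T \<and> T \<subseteq> ?Q" using oT xT TQ by blast
qed



lemma hclass_in_U: "U \<subseteq> Kset \<Longrightarrow> r \<in> carrierBI \<Longrightarrow> (hclass r \<in> U \<longleftrightarrow> r \<in> \<Union>U)"
proof
  assume U: "U \<subseteq> Kset" and r: "r \<in> carrierBI"
  show "hclass r \<in> U \<Longrightarrow> r \<in> \<Union>U" using hclass_self[OF r] by blast
  assume "r \<in> \<Union>U"
  then obtain c where c: "c \<in> U" "r \<in> c" by blast
  then show "hclass r \<in> U" using hclass_mem[of c r] U by auto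
qed

lemma saturated_Union: "U \<subseteq> Kset \<Longrightarrow> saturated (\<Union>U)"
  unfolding saturated_def
proof (intro allI impI)
  fix r r' assume U: "U \<subseteq> Kset" and r: "r \<in> \<Union>U" and rr: "(r, r') \<in> h_rel"
  then obtain c where c: "c \<in> U" "r \<in> c" by blast
  then have "hclass r = c" using hclass_mem U by blast
  then have "r' \<in> c" using rr unfolding hclass_def by blast
  then show "r' \<in> \<Union>U" using c by blast
qed

lemma cont_phi: "continuous_map (prod_topology euclidean XT) YT (\<lambda>x. (fst (snd x), snd (snd x) + fst x))"
  unfolding continuous_map_pairwise o_def fst_conv snd_conv
proof
  show "continuous_map (prod_topology euclidean XT) beta_top (\<lambda>x. fst (snd x))"
    using continuous_map_compose[OF continuous_map_snd continuous_map_fst] by (simp add: o_def)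
  have "continuous_map (prod_topology euclidean XT) euclidean (\<lambda>x. snd (snd x))"
    using continuous_map_compose[OF continuous_map_snd cont_snd_eu] by (simp add: o_def)
  moreover have "continuous_map (prod_topology euclidean XT) euclidean (\<lambda>x. fst x)"
    by (rule continuous_map_fst)
  ultimately show "continuous_map (prod_topology euclidean XT) euclidean (\<lambda>x. snd (snd x) + fst x)"
    by (rule continuous_map_add)
qed

lemma openO:
  fixes U :: "((int^'n::finite) set set \<times> (real^'n)) set set"
  assumes U: "openin K_top U"
  shows "openin (prod_topology euclidean XT)
     {x \<in> topspace (prod_topology euclidean XT). hclass (sigma_rep (fst x) (snd x)) \<in> U}"
proof -
  have U': "U \<subseteq> Kset" "openin XT (\<Union>U)" using U unfolding openin_K by auto
  let ?Q = "{(p, y). p \<in> ults \<and> (shift (flv y) p, y - cv (flv y)) \<in> \<Union>U}"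
  have oQ: "openin YT ?Q" by (rule openin_Q[OF U'(2) saturated_Union[OF U'(1)]])
  have eq: "{x \<in> topspace (prod_topology euclidean XT). hclass (sigma_rep (fst x) (snd x)) \<in> U}
      = {x \<in> topspace (prod_topology euclidean XT). (fst (snd x), snd (snd x) + fst x) \<in> ?Q}"
  proof (rule Collect_cong, rule conj_cong[OF refl])
    fix x :: "(real^'n) \<times> ((int^'n) set set \<times> (real^'n))"
    assume "x \<in> topspace (prod_topology euclidean XT)"
    then have xc: "snd x \<in> carrierBI" by (auto simp: carrierBI_def topspace_beta ults_def)
    obtain g p i where x: "x = (g, (p, i))" by (cases x) auto
    have c: "(p, i) \<in> carrierBI" using xc x by simp
    have i: "i \<in> Icube" and p: "p \<in> ults" using c by (auto simp: carrierBI_def ults_def)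
    have sr: "sigma_rep g (p, i) \<in> carrierBI" by (rule sigma_rep_carrier[OF c])
    show "hclass (sigma_rep (fst x) (snd x)) \<in> U \<longleftrightarrow> (fst (snd x), snd (snd x) + fst x) \<in> ?Q"
      unfolding x fst_conv snd_conv hclass_in_U[OF U'(1) sr] using p
      by (simp add: sigma_rep_eq[OF i])
  qed
  show ?thesis unfolding eq by (rule openin_continuous_map_preimage[OF cont_phi oQ])
qed

lemma finite_class: "c \<in> Kset \<Longrightarrow> finite c"
proof -
  assume c: "c \<in> Kset"
  obtain r where r: "r \<in> c" using Kset_ne c by blast
  have rc: "r \<in> carrierBI" using r c Kset_sub by blast
  have "c = sat {r}" using hclass_mem[OF c r] unfolding sat_def hclass_def by simp
  also have "\<dots> = (\<Union>d\<in>Dfin. Tm d ` ({r} \<inter> Dd d))" using sat_eq[of "{r}"] rc by simp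
  finally have ceq: "c = (\<Union>d\<in>Dfin. Tm d ` ({r} \<inter> Dd d))" .
  show "finite c" unfolding ceq by (intro finite_UN_I finite_Dfin finite_imageI) simp
qed

lemma cont_action: "continuous_map (prod_topology euclidean K_top) K_top (\<lambda>(g, c). sigma g c)"
  unfolding continuous_map_def
proof (intro conjI allI impI)
  show "(\<lambda>(g, c). sigma g c) \<in> topspace (prod_topology euclidean K_top) \<rightarrow> topspace K_top"
    unfolding topspace_prod_topology topspace_K using sigma_in by auto
  fix U :: "((int^'a) set set \<times> (real^'a)) set set" assume U: "openin K_top U"
  have U': "U \<subseteq> Kset" using U unfolding openin_K by auto
  let ?O = "{x \<in> topspace (prod_topology euclidean XT). hclass (sigma_rep (fst x) (snd x)) \<in> U}"
  have oO: "openin (prod_topology euclidean XT) ?O" by (rule openO[OF U])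
  let ?P = "{x \<in> topspace (prod_topology euclidean K_top). (case x of (g, c) \<Rightarrow> sigma g c) \<in> U}"
  show "openin (prod_topology euclidean K_top) ?P"
    unfolding openin_prod_topology_alt
  proof (intro allI impI)
    fix g0 c0 assume gc: "(g0, c0) \<in> ?P"
    then have c0: "c0 \<in> Kset" and sU: "sigma g0 c0 \<in> U" unfolding topspace_prod_topology topspace_K by auto
    have "\<forall>r\<in>c0. \<exists>GH. openin euclidean (fst GH) \<and> openin XT (snd GH) \<and> g0 \<in> fst GH \<and> r \<in> snd GH \<and> fst GH \<times> snd GH \<subseteq> ?O"
    proof
      fix r assume r: "r \<in> c0"
      have rc: "r \<in> carrierBI" using r c0 Kset_sub by blast
      have "(g0, r) \<in> ?O" using sU sigma_wd[OF c0 r] rc by (simp add: carrierBI_def topspace_beta ults_def)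
      then obtain G H where "openin euclidean G" "openin XT H" "g0 \<in> G" "r \<in> H" "G \<times> H \<subseteq> ?O"
        using oO unfolding openin_prod_topology_alt by meson
      then show "\<exists>GH. openin euclidean (fst GH) \<and> openin XT (snd GH) \<and> g0 \<in> fst GH \<and> r \<in> snd GH \<and> fst GH \<times> snd GH \<subseteq> ?O"
        by (intro exI[of _ "(G, H)"]) simp
    qed
    then obtain GH where GH: "\<forall>r\<in>c0. openin euclidean (fst (GH r)) \<and> openin XT (snd (GH r)) \<and> g0 \<in> fst (GH r) \<and> r \<in> snd (GH r) \<and> fst (GH r) \<times> snd (GH r) \<subseteq> ?O"
      by (rule bchoice[THEN exE]) blast
    define G where "G = (\<Inter>r\<in>c0. fst (GH r))"
    define H where "H = (\<Union>r\<in>c0. snd (GH r))"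
    have oG: "open G" unfolding G_def using finite_class[OF c0] GH by (intro open_INT) auto
    have g0G: "g0 \<in> G" unfolding G_def using GH by blast
    have oH: "openin XT H" unfolding H_def using GH by (intro openin_Union) auto
    have c0H: "c0 \<subseteq> H" unfolding H_def using GH by blast
    obtain V where V: "openin XT V" "c0 \<subseteq> V" "V \<subseteq> H" "saturated V"
      using sat_nbhd[OF oH c0 c0H] by blast
    define S where "S = {c \<in> Kset. c \<subseteq> V}"
    have oS: "openin K_top S" unfolding S_def by (rule openin_K_sat[OF V(1) V(4)])
    have c0S: "c0 \<in> S" unfolding S_def using c0 V(2) by blast
    have GS: "G \<times> S \<subseteq> ?P"
    proof
      fix x assume x: "x \<in> G \<times> S"
      then obtain g c where gc: "x = (g, c)" "g \<in> G" "c \<in> Kset" "c \<subseteq> V" unfolding S_def by blast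
      obtain r where r: "r \<in> c" using Kset_ne gc(3) by blast
      then have "r \<in> H" using gc(4) V(3) by blast
      then obtain r1 where r1: "r1 \<in> c0" "r \<in> snd (GH r1)" unfolding H_def by blast
      have "g \<in> fst (GH r1)" using gc(2) r1(1) unfolding G_def by blast
      then have "(g, r) \<in> ?O" using GH r1 by blast
      then have "hclass (sigma_rep g r) \<in> U" by simp
      then have "sigma g c \<in> U" using sigma_wd[OF gc(3) r] by simp
      then show "x \<in> ?P" using gc(1) gc(3) unfolding topspace_prod_topology topspace_K by simp
    qed
    show "\<exists>G S. openin euclidean G \<and> openin K_top S \<and> g0 \<in> G \<and> c0 \<in> S \<and> G \<times> S \<subseteq> ?P"
      using oG g0G oS c0S GS by (intro exI[of _ G] exI[of _ S]) simp
  qed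
qed



lemma pt_ultra: "ultrafilter_on (pt z)"
  unfolding ultrafilter_on_def pt_def by auto

lemma shift_pt: "shift z (pt 0) = pt z"
  unfolding shift_def pt_def by simp

lemma c00_carrier: "(pt (0::int^'n), 0::real^'n) \<in> carrierBI"
  by (simp add: carrierBI_def Icube_def pt_ultra)

lemma orbit_point:
  fixes z :: "int^'n" and t :: "real^'n"
  assumes t: "\<And>k. 0 \<le> t$k \<and> t$k < 1"
  shows "sigma (cv z + t) (hclass (pt 0, 0)) = hclass (pt z, t)"
proof -
  have c: "hclass (pt (0::int^'n), 0::real^'n) \<in> Kset" by (rule hclass_Kset[OF c00_carrier])
  have m: "(pt (0::int^'n), 0::real^'n) \<in> hclass (pt 0, 0)" by (rule hclass_self[OF c00_carrier])
  have i0: "(0::real^'n) \<in> Icube" by (simp add: Icube_def)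
  have fl: "flv (cv z + t) = z"
  proof -
    have "\<lfloor>of_int (z$k) + t$k\<rfloor> = z$k" for k using t[of k] by (intro floor_unique) auto
    then show ?thesis by (simp add: flv_def cv_def vec_eq_iff)
  qed
  show ?thesis unfolding sigma_wd[OF c m] sigma_rep_eq[OF i0] using fl by (simp add: shift_pt)
qed

lemma dense_orbit: "K_top closure_of (range (\<lambda>g. sigma g (hclass (pt (0::int^'n), 0::real^'n)))) = topspace K_top"
proof
  show "K_top closure_of (range (\<lambda>g. sigma g (hclass (pt (0::int^'n), 0::real^'n)))) \<subseteq> topspace K_top"
    by (rule closure_of_subset_topspace)
  show "topspace K_top \<subseteq> K_top closure_of (range (\<lambda>g. sigma g (hclass (pt (0::int^'n), 0::real^'n))))"
  proof
    fix c :: "((int^'n) set set \<times> (real^'n)) set" assume cK: "c \<in> topspace K_top"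
    then have c: "c \<in> Kset" by (simp add: topspace_K)
    show "c \<in> K_top closure_of (range (\<lambda>g. sigma g (hclass (pt (0::int^'n), 0::real^'n))))"
      unfolding in_closure_of
    proof (intro conjI allI impI cK)
      fix T assume T: "c \<in> T \<and> openin K_top T"
      then have T': "T \<subseteq> Kset" "openin XT (\<Union>T)" unfolding openin_K by auto
      obtain r where r: "r \<in> c" using Kset_ne c by blast
      obtain p i where ri: "r = (p, i)" by (cases r)
      have rT: "(p, i) \<in> \<Union>T" using r ri T by blast
      obtain U1 V1 where UV: "openin beta_top U1" "openin (top_of_set Icube) V1" "p \<in> U1" "i \<in> V1"
        "U1 \<times> V1 \<subseteq> \<Union>T"
        using T'(2) rT unfolding openin_prod_topology_alt by meson
      have "betaP U1" using UV(1) openin_beta by blast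
      then obtain A where A: "A \<in> p" "bas A \<subseteq> U1" using UV(3) unfolding betaP_def by blast
      have pu: "ultrafilter_on p" using UV(1,3) openin_subset[OF UV(1)] by (auto simp: topspace_beta ults_def)
      have "A \<noteq> {}" using A(1) uf_empty[OF pu] by auto
      then obtain z where z: "z \<in> A" by blast
      have "pt z \<in> bas A" using z pt_ultra[of z] unfolding bas_def by (simp add: pt_def)
      then have ptU: "pt z \<in> U1" using A(2) by blast
      obtain e where e: "e > 0" "\<forall>x'\<in>Icube. dist x' i < e \<longrightarrow> x' \<in> V1"
        using UV(2,4) unfolding openin_euclidean_subtopology_iff by blast
      have iI: "i \<in> Icube" using UV(2,4) openin_subset[OF UV(2)] by auto
      define \<delta> where "\<delta> = min (1/2) (e / (2 * (norm i + 1)))"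
      have "0 < 2 * (norm i + 1)" by (smt (verit) norm_ge_zero)
      then have "0 < e / (2 * (norm i + 1))" using e(1) by (rule divide_pos_pos[rotated])
      then have d0: "0 < \<delta>" "\<delta> < 1" unfolding \<delta>_def by auto
      define t where "t = (1 - \<delta>) *\<^sub>R i"
      have tk: "0 \<le> t$k \<and> t$k < 1" for k
      proof -
        have "0 \<le> i$k" "i$k \<le> 1" using iI by (auto simp: Icube_def)
        moreover have "(1 - \<delta>) * i$k \<le> (1 - \<delta>) * 1" using d0 \<open>i$k \<le> 1\<close> by (intro mult_left_mono) auto
        moreover have "0 \<le> (1 - \<delta>) * i$k" using d0 \<open>0 \<le> i$k\<close> by simp
        moreover have "(1 - \<delta>) * (1::real) < 1" using d0 by simp
        ultimately have "0 \<le> (1 - \<delta>) * i$k \<and> (1 - \<delta>) * i$k < 1"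
          using le_less_trans by blast
        then show ?thesis unfolding t_def by simp
      qed
      have tI: "t \<in> Icube" using tk by (auto simp: Icube_def less_imp_le)
      have "dist t i = \<delta> * norm i"
      proof -
        have "t - i = (- \<delta>) *\<^sub>R i" unfolding t_def by (simp add: algebra_simps)
        then show ?thesis using d0 by (simp add: dist_norm)
      qed
      also have "\<dots> \<le> e / (2 * (norm i + 1)) * norm i"
        using d0 unfolding \<delta>_def by (intro mult_right_mono) auto
      also have "\<dots> < e"
      proof -
        have "e / (2 * (norm i + 1)) * norm i = e * (norm i / (2 * (norm i + 1)))" by simp
        also have "\<dots> < e * 1"
        proof (rule mult_strict_left_mono[OF _ e(1)])
          have pos: "0 < 2 * (norm i + 1)" by (smt (verit) norm_ge_zero)
          have "norm i < 1 * (2 * (norm i + 1))" by (smt (verit) norm_ge_zero)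
          then show "norm i / (2 * (norm i + 1)) < 1" by (simp only: pos_divide_less_eq[OF pos])
        qed
        finally show ?thesis by simp
      qed
      finally have "t \<in> V1" using e(2) tI by blast
      then have "(pt z, t) \<in> \<Union>T" using UV(5) ptU by blast
      moreover have "(pt z, t) \<in> carrierBI" using tI pt_ultra by (simp add: carrierBI_def)
      ultimately have "hclass (pt z, t) \<in> T" using hclass_in_U[OF T'(1)] by blast
      moreover have "hclass (pt z, t) = sigma (cv z + t) (hclass (pt 0, 0))"
        using orbit_point[of t z] tk by simp
      ultimately show "\<exists>y. y \<in> range (\<lambda>g. sigma g (hclass (pt (0::int^'n), 0::real^'n))) \<and> y \<in> T"
        by auto
    qed
  qed
qed



theorem lemma1:
  shows "(\<forall>x. \<forall>c\<in>(Kset :: ((int^'n::finite) set set \<times> (real^'n)) set set). \<forall>r\<in>c.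
            sigma x c = hclass (sigma_rep x r))
         \<and> ambit (K_top :: ((int^'n) set set \<times> (real^'n)) set topology) sigma
              (hclass (pt (0::int^'n), 0::real^'n))"
proof
  show "\<forall>x. \<forall>c\<in>(Kset :: ((int^'n::finite) set set \<times> (real^'n)) set set). \<forall>r\<in>c.
            sigma x c = hclass (sigma_rep x r)" using sigma_wd by blast
  have ds: "dyn_system (K_top :: ((int^'n) set set \<times> (real^'n)) set topology) sigma"
    unfolding dyn_system_def topspace_K
  proof (intro conjI allI ballI)
    show "compact_space (K_top :: ((int^'n) set set \<times> (real^'n)) set topology)" by (rule compact_K)
    show "Hausdorff_space (K_top :: ((int^'n) set set \<times> (real^'n)) set topology)" by (rule Hausdorff_K)
    show "sigma g x \<in> Kset" if "x \<in> Kset" for g :: "real^'n" and x :: "((int^'n) set set \<times> (real^'n)) set"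
      using sigma_in that by blast
    show "sigma 0 x = x" if "x \<in> Kset" for x :: "((int^'n) set set \<times> (real^'n)) set"
      using sigma_0 that by blast
    show "sigma (g + h) x = sigma g (sigma h x)" if "x \<in> Kset" for g h :: "real^'n" and x :: "((int^'n) set set \<times> (real^'n)) set"
      using sigma_add that by blast
    show "continuous_map (prod_topology euclidean K_top) (K_top :: ((int^'n) set set \<times> (real^'n)) set topology) (\<lambda>(g, x). sigma g x)"
      by (rule cont_action)
  qed
  have x0: "hclass (pt (0::int^'n), 0::real^'n) \<in> topspace K_top"
    unfolding topspace_K by (rule hclass_Kset[OF c00_carrier])
  show "ambit (K_top :: ((int^'n) set set \<times> (real^'n)) set topology) sigma
              (hclass (pt (0::int^'n), 0::real^'n))"
    unfolding ambit_def using ds x0 dense_orbit by blast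
qed


end
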